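(* Suppose $\varepsilon|_{\Omega_k}\in C^{1,1}(\overline{\Omega_k})$ for each $k$, and each interface function $g_k$ is piecewise $C^2$ on $[0,L_x]$. Then there is a constant $C_{10}>0$ independent of $h$ such that $$\|\varepsilon-\varepsilon_h\|_{L^q(\Omega)}\le C_{10}\,h^{1/q}$$ for all $1\le q<\infty$ and all $h$ small enough.
   Context: $H,L_x>0$, $\Omega=(0,L_x)\times(-H,H)$. There are $I\ge1$ interfaces given by $g_k:[0,L_x]\to\mathbb R$ ($k=1,\dots,I$), piecewise of the form $\sum_l\mathbf 1_{[x_{lk},x_{(l+1)k})}\phi_{lk}$ with Lipschitz pieces and nonzero jumps at the finitely many break points; the graphs are separated from each other and from $x_2=\pm H$ by some $\delta>0$, and $\Omega_k$ ($k=1,\dots,I+1$) is the region of $\Omega$ between the graphs of $g_{k-1}$ and $g_k$ ($g_0\equiv -H$, $g_{I+1}\equiv H$). $\varepsilon:\Omega\to\mathbb C$ is the relative permittivity. Slices: $-H=h_0<h_1<\dots<h_S=H$, $S_j=\{(x_1,x_2)\in\Omega:h_{j-1}\le x_2<h_j\}$, $\Delta h_j=h_j-h_{j-1}$, $h=\max_j\Delta h_j$, with $h/\min_j\Delta h_j\le C_\Delta$ for a fixed constant $C_\Delta>0$, and every point where $g_k'=0$ lies on an inter-slice line $x_2=h_j$. The stairstep approximation is $\varepsilon_h(x_1,x_2)=\varepsilon(x_1,h_{j-1/2})$ on $S_j$, $h_{j-1/2}=(h_{j-1}+h_j)/2$ (in slices where $\varepsilon$ is piecewise constant and interfaces are already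 stairsteps, $\varepsilon_h=\varepsilon$). *)

theory Defs
  imports "HOL-Analysis.Analysis"
begin

definition Omega :: "real \<Rightarrow> real \<Rightarrow> (real \<times> real) set" where
  "Omega H Lx = {0<..<Lx} \<times> {-H<..<H}"

definition iface :: "real \<Rightarrow> nat \<Rightarrow> (nat \<Rightarrow> real \<Rightarrow> real) \<Rightarrow> nat \<Rightarrow> real \<Rightarrow> real" where
  "iface H I g k x = (if k = 0 then -H else if k = Suc I then H else g k x)"

definition region :: "real \<Rightarrow> real \<Rightarrow> nat \<Rightarrow> (nat \<Rightarrow> real \<Rightarrow> real) \<Rightarrow> nat \<Rightarrow> (real \<times> real) set" where
  "region H Lx I g k = {p \<in> Omega H Lx. iface H I g (k - 1) (fst p) < snd p \<and> snd p < iface H I g k (fst p)}"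

definition piecewise_rep :: "real \<Rightarrow> (real \<Rightarrow> real) \<Rightarrow> real list \<Rightarrow> (nat \<Rightarrow> real \<Rightarrow> real) \<Rightarrow> bool" where
  "piecewise_rep Lx g xs phi \<longleftrightarrow>
     length xs \<ge> 2 \<and> hd xs = 0 \<and> last xs = Lx \<and> sorted_wrt (<) xs \<and>
     (\<forall>l < length xs - 1. \<forall>x. xs!l \<le> x \<and> (x < xs!(l+1) \<or> (l + 2 = length xs \<and> x = Lx))
         \<longrightarrow> g x = phi l x)"

definition piecewise_lipschitz_iface :: "real \<Rightarrow> (real \<Rightarrow> real) \<Rightarrow> bool" where
  "piecewise_lipschitz_iface Lx g \<longleftrightarrow> (\<exists>xs phi. piecewise_rep Lx g xs phi \<and>
     (\<forall>l < length xs - 1. \<exists>L. lipschitz_on L {xs!l..xs!(l+1)} (phi l)) \<and>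
     (\<forall>l. 0 < l \<and> l < length xs - 1 \<longrightarrow> phi (l - 1) (xs!l) \<noteq> phi l (xs!l)))"

definition C2_on :: "real set \<Rightarrow> (real \<Rightarrow> real) \<Rightarrow> bool" where
  "C2_on S f \<longleftrightarrow> (\<exists>f1 f2. (\<forall>x\<in>S. (f has_real_derivative f1 x) (at x within S)) \<and>
     (\<forall>x\<in>S. (f1 has_real_derivative f2 x) (at x within S)) \<and> continuous_on S f2)"

definition piecewise_C2 :: "real \<Rightarrow> (real \<Rightarrow> real) \<Rightarrow> bool" where
  "piecewise_C2 Lx g \<longleftrightarrow> (\<exists>xs phi. piecewise_rep Lx g xs phi \<and>
     (\<forall>l < length xs - 1. C2_on {xs!l..xs!(l+1)} (phi l)))"

text \<open>f restricted to U belongs to C^{1,1}(closure U): f is differentiable on U with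
  bounded function values and first derivatives, and Lipschitz first derivatives
  (hence all extend to the closure).\<close>
definition C11_on :: "(real \<times> real) set \<Rightarrow> (real \<times> real \<Rightarrow> complex) \<Rightarrow> bool" where
  "C11_on U f \<longleftrightarrow> (\<exists>d1 d2 M L.
     (\<forall>x\<in>U. (f has_derivative (\<lambda>v. of_real (fst v) * d1 x + of_real (snd v) * d2 x)) (at x within U)) \<and>
     (\<forall>x\<in>U. cmod (f x) \<le> M \<and> cmod (d1 x) \<le> M \<and> cmod (d2 x) \<le> M) \<and>
     (\<forall>x\<in>U. \<forall>y\<in>U. cmod (d1 x - d1 y) \<le> L * dist x y \<and> cmod (d2 x - d2 y) \<le> L * dist x y))"

definition slicing :: "real \<Rightarrow> nat \<Rightarrow> (nat \<Rightarrow> real) \<Rightarrow> bool" where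
  "slicing H S hs \<longleftrightarrow> S \<ge> 1 \<and> hs 0 = -H \<and> hs S = H \<and> (\<forall>j\<in>{1..S}. hs (j - 1) < hs j)"

definition mesh :: "nat \<Rightarrow> (nat \<Rightarrow> real) \<Rightarrow> real" where
  "mesh S hs = Max ((\<lambda>j. hs j - hs (j - 1)) ` {1..S})"

definition mesh_ratio_ok :: "real \<Rightarrow> nat \<Rightarrow> (nat \<Rightarrow> real) \<Rightarrow> bool" where
  "mesh_ratio_ok CD S hs \<longleftrightarrow> (\<forall>j\<in>{1..S}. mesh S hs \<le> CD * (hs j - hs (j - 1)))"

definition flat_points_on_lines :: "real \<Rightarrow> nat \<Rightarrow> (nat \<Rightarrow> real \<Rightarrow> real) \<Rightarrow> nat \<Rightarrow> (nat \<Rightarrow> real) \<Rightarrow> bool" where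
  "flat_points_on_lines Lx I g S hs \<longleftrightarrow>
     (\<forall>k\<in>{1..I}. \<forall>x\<in>{0<..<Lx}. (g k has_real_derivative 0) (at x) \<longrightarrow> (\<exists>j\<in>{0..S}. g k x = hs j))"

definition eps_h :: "(real \<times> real \<Rightarrow> complex) \<Rightarrow> nat \<Rightarrow> (nat \<Rightarrow> real) \<Rightarrow> real \<times> real \<Rightarrow> complex" where
  "eps_h eps S hs p = (\<Sum>j\<in>{1..S}. if hs (j - 1) \<le> snd p \<and> snd p < hs j
                         then eps (fst p, (hs (j - 1) + hs j) / 2) else 0)"

definition Lq_norm :: "real \<Rightarrow> (real \<times> real) set \<Rightarrow> (real \<times> real \<Rightarrow> complex) \<Rightarrow> ennreal" where
  "Lq_norm q A f = (let I = (\<integral>\<^sup>+ x. ennreal (cmod (f x) powr q) * indicator A x \<partial>lebesgue)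
                    in if I = \<infinity> then \<infinity> else ennreal (enn2real I powr (1 / q)))"

end

theory Submission
  imports Defs
begin

lemma slicing_mono:
  assumes "slicing H S hs" "i < j" "j \<le> S"
  shows "hs i < hs j"
  using assms(2,3)
proof (induction j)
  case 0 then show ?case by simp
next
  case (Suc j)
  have step: "hs j < hs (Suc j)" using assms(1) Suc.prems unfolding slicing_def
    by (metis Suc_le_eq atLeastAtMost_iff diff_Suc_1 le_add1 plus_1_eq_Suc zero_less_Suc le_less_Suc_eq Suc_leI)
  show ?case
  proof (cases "i = j")
    case True then show ?thesis using step by simp
  next
    case False then have "hs i < hs j" using Suc by simp
    then show ?thesis using step by simp
  qed
qed

lemma slicing_mono_le:
  assumes "slicing H S hs" "i \<le> j" "j \<le> S"
  shows "hs i \<le> hs j"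
  using slicing_mono[OF assms(1)] assms by (cases "i = j") (auto intro: less_imp_le)

lemma slice_exists:
  assumes sl: "slicing H S hs" and y: "-H \<le> y" "y < H"
  shows "\<exists>j\<in>{1..S}. hs (j - 1) \<le> y \<and> y < hs j"
proof -
  have ex: "\<exists>j. j \<le> S \<and> y < hs j" using sl y unfolding slicing_def by auto
  define j where "j = (LEAST j. j \<le> S \<and> y < hs j)"
  have j1: "j \<le> S \<and> y < hs j" unfolding j_def by (rule LeastI_ex[OF ex])
  have j0: "j \<noteq> 0"
  proof
    assume "j = 0" then have "y < hs 0" using j1 by simp
    moreover have "hs 0 = -H" using sl unfolding slicing_def by blast
    ultimately show False using y by linarith
  qed
  have "\<not> (j - 1 \<le> S \<and> y < hs (j - 1))"
    unfolding j_def by (rule not_less_Least) (use j0 in \<open>simp add: j_def[symmetric]\<close>)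
  then have "hs (j - 1) \<le> y" using j1 by auto
  then show ?thesis using j0 j1 by auto
qed

lemma slice_unique:
  assumes sl: "slicing H S hs" and "j \<in> {1..S}" "i \<in> {1..S}"
    and "hs (j - 1) \<le> y" "y < hs j" "hs (i - 1) \<le> y" "y < hs i"
  shows "i = j"
proof (rule ccontr)
  assume "i \<noteq> j"
  then consider "i < j" | "j < i" by linarith
  then show False
  proof cases
    case 1 then have "hs i \<le> hs (j - 1)" using assms by (intro slicing_mono_le[OF sl]) auto
    then show ?thesis using assms by auto
  next
    case 2 then have "hs j \<le> hs (i - 1)" using assms by (intro slicing_mono_le[OF sl]) auto
    then show ?thesis using assms by auto
  qed
qed

lemma eps_h_eq:
  assumes sl: "slicing H S hs" and j: "j \<in> {1..S}" and y: "hs (j - 1) \<le> snd p" "snd p < hs j"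
  shows "eps_h eps S hs p = eps (fst p, (hs (j - 1) + hs j) / 2)"
proof -
  have "eps_h eps S hs p = (\<Sum>i\<in>{1..S}. if i = j then eps (fst p, (hs (j - 1) + hs j) / 2) else 0)"
    unfolding eps_h_def
  proof (rule sum.cong[OF refl])
    fix i assume i: "i \<in> {1..S}"
    show "(if hs (i - 1) \<le> snd p \<and> snd p < hs i then eps (fst p, (hs (i - 1) + hs i) / 2) else 0) =
      (if i = j then eps (fst p, (hs (j - 1) + hs j) / 2) else 0)"
    proof (cases "i = j")
      case True then show ?thesis using y by simp
    next
      case False
      have nc: "\<not> (hs (i - 1) \<le> snd p \<and> snd p < hs i)"
        using slice_unique[OF sl j i y] False by blast
      show ?thesis by (simp only: if_not_P[OF nc] if_not_P[OF False])
    qed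
  qed
  also have "\<dots> = eps (fst p, (hs (j - 1) + hs j) / 2)" using j by simp
  finally show ?thesis .
qed

lemma mid_not_hs:
  assumes sl: "slicing H S hs" and j: "j \<in> {1..S}" and i: "i \<le> S"
  shows "hs i \<noteq> (hs (j - 1) + hs j) / 2"
proof -
  have lt: "hs (j - 1) < hs j" using sl j unfolding slicing_def by auto
  consider "i \<le> j - 1" | "j \<le> i" by linarith
  then show ?thesis
  proof cases
    case 1 then have "hs i \<le> hs (j - 1)" using j by (intro slicing_mono_le[OF sl]) auto
    then show ?thesis using lt by auto
  next
    case 2 then have "hs j \<le> hs i" using i by (intro slicing_mono_le[OF sl]) auto
    then show ?thesis using lt by auto
  qed
qed

lemma slice_bounds:
  assumes sl: "slicing H S hs" and j: "j \<in> {1..S}"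
  shows "-H \<le> hs (j - 1)" "hs j \<le> H" "hs (j - 1) < hs j" "hs j - hs (j - 1) \<le> mesh S hs"
proof -
  show "-H \<le> hs (j - 1)" using slicing_mono_le[OF sl, of 0 "j - 1"] sl j unfolding slicing_def by auto
  show "hs j \<le> H" using slicing_mono_le[OF sl, of j S] sl j unfolding slicing_def by auto
  show "hs (j - 1) < hs j" using sl j unfolding slicing_def by auto
  show "hs j - hs (j - 1) \<le> mesh S hs" unfolding mesh_def using j by (intro Max_ge) auto
qed

lemma mesh_pos:
  assumes sl: "slicing H S hs" shows "mesh S hs > 0"
proof -
  have "1 \<in> {1..S}" using sl unfolding slicing_def by auto
  from slice_bounds[OF sl this] show ?thesis by linarith
qed


lemma rep_nodes:
  assumes "piecewise_rep Lx g xs phi" "l < length xs - 1"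
  shows "0 \<le> xs!l" "xs!l < xs!(l+1)" "xs!(l+1) \<le> Lx"
proof -
  have len: "length xs \<ge> 2" "hd xs = 0" "last xs = Lx" "sorted_wrt (<) xs"
    using assms(1) unfolding piecewise_rep_def by auto
  have ne: "xs \<noteq> []" using len by auto
  have h0: "xs!0 = 0" using len(2) hd_conv_nth[OF ne] by simp
  have hl: "xs!(length xs - 1) = Lx" using len(3) last_conv_nth[OF ne] by simp
  have le: "xs!i \<le> xs!j" if "i \<le> j" "j < length xs" for i j
    using sorted_wrt_nth_less[OF len(4)] that by (cases "i = j") (auto intro: less_imp_le)
  show "0 \<le> xs!l" using le[of 0 l] h0 assms(2) by auto
  show "xs!l < xs!(l+1)" using sorted_wrt_nth_less[OF len(4)] assms(2) by auto
  show "xs!(l+1) \<le> Lx" using le[of "l+1" "length xs - 1"] hl assms(2) by auto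
qed

lemma rep_cover:
  assumes rep: "piecewise_rep Lx g xs phi" and x: "0 \<le> x" "x \<le> Lx"
  shows "\<exists>l < length xs - 1. xs!l \<le> x \<and> x \<le> xs!(l+1) \<and> g x = phi l x"
proof -
  have len: "length xs \<ge> 2" "hd xs = 0" "last xs = Lx" "sorted_wrt (<) xs"
    using rep unfolding piecewise_rep_def by auto
  have ne: "xs \<noteq> []" using len by auto
  have h0: "xs!0 = 0" using len(2) hd_conv_nth[OF ne] by simp
  have hl: "xs!(length xs - 1) = Lx" using len(3) last_conv_nth[OF ne] by simp
  define P where "P = (\<lambda>l. l < length xs - 1 \<and> xs!l \<le> x)"
  have P0: "P 0" using h0 x len unfolding P_def by auto
  define l where "l = (GREATEST l. P l)"
  have bnd: "\<forall>y. P y \<longrightarrow> y \<le> length xs" unfolding P_def by auto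
  have Pl: "P l" unfolding l_def by (rule GreatestI_nat[where P=P, OF P0]) (use bnd in auto)
  have gr: "\<And>y. P y \<Longrightarrow> y \<le> l" unfolding l_def by (rule Greatest_le_nat[where P=P]) (use bnd in auto)
  have cond: "x < xs!(l+1) \<or> (l + 2 = length xs \<and> x = Lx)"
  proof (cases "l + 2 = length xs")
    case True
    then have "xs!(l+1) = Lx" using hl by (metis add_diff_cancel_right' one_add_one add.assoc)
    then show ?thesis using x True by auto
  next
    case False
    then have "l + 1 < length xs - 1" using Pl len unfolding P_def by auto
    then have "\<not> P (l+1)" using gr by fastforce
    then show ?thesis using \<open>l + 1 < length xs - 1\<close> unfolding P_def by auto
  qed
  have "g x = phi l x" using rep Pl cond unfolding piecewise_rep_def P_def by blast
  moreover have "x \<le> xs!(l+1)"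
  proof (cases "x < xs!(l+1)")
    case False
    then have "l + 2 = length xs" "x = Lx" using cond by auto
    then have "l + 1 = length xs - 1" by simp
    then show ?thesis using hl \<open>x = Lx\<close> by simp
  qed simp
  ultimately show ?thesis using Pl unfolding P_def by auto
qed

lemma limpt_level:
  fixes phi :: "real \<Rightarrow> real"
  assumes d: "(phi has_real_derivative D) (at y)" and lim: "y islimpt E" and E: "\<forall>z\<in>E. phi z = m"
  shows "phi y = m" "D = 0"
proof -
  have nt: "at y within E \<noteq> bot" using lim trivial_limit_within by blast
  have "(phi \<longlongrightarrow> phi y) (at y)"
    using DERIV_continuous[OF d] by (simp add: isCont_def)
  then have c: "(phi \<longlongrightarrow> phi y) (at y within E)"
    by (rule tendsto_mono[OF at_le[OF subset_UNIV]])
  have "(phi \<longlongrightarrow> m) (at y within E)"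
    by (rule tendsto_eventually) (use E in \<open>auto simp: eventually_at_filter\<close>)
  then show py: "phi y = m" using tendsto_unique[OF nt c] by simp
  have "((\<lambda>z. (phi z - phi y) / (z - y)) \<longlongrightarrow> D) (at y within E)"
    using has_field_derivative_iff d has_field_derivative_at_within by blast
  moreover have "((\<lambda>z. (phi z - phi y) / (z - y)) \<longlongrightarrow> 0) (at y within E)"
    by (rule tendsto_eventually) (use E py in \<open>auto simp: eventually_at_filter\<close>)
  ultimately show "D = 0" using tendsto_unique[OF nt] by blast
qed

lemma level_countable:
  assumes rep: "piecewise_rep Lx g xs phi"
    and c2: "\<forall>l < length xs - 1. C2_on {xs!l..xs!(l+1)} (phi l)"
    and flat: "\<forall>x\<in>{0<..<Lx}. (g has_real_derivative 0) (at x) \<longrightarrow> g x \<noteq> m"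
  shows "countable {x\<in>{0..Lx}. g x = m}"
proof -
  define E where "E l = {x \<in> {xs!l<..<xs!(l+1)}. phi l x = m}" for l
  have sub: "{x\<in>{0..Lx}. g x = m} \<subseteq> set xs \<union> (\<Union>l\<in>{..<length xs - 1}. E l)"
  proof
    fix x assume x: "x \<in> {x\<in>{0..Lx}. g x = m}"
    then obtain l where l: "l < length xs - 1" "xs!l \<le> x" "x \<le> xs!(l+1)" "g x = phi l x"
      using rep_cover[OF rep] by auto
    have "xs!l \<in> set xs" "xs!(l+1) \<in> set xs" using l(1) by auto
    then show "x \<in> set xs \<union> (\<Union>l\<in>{..<length xs - 1}. E l)"
      using l x unfolding E_def by (cases "x = xs!l \<or> x = xs!(l+1)") auto
  qed
  have cE: "countable (E l)" if l: "l < length xs - 1" for l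
  proof -
    let ?a = "xs!l" and ?b = "xs!(l+1)"
    obtain f1 f2 where f1: "\<forall>x\<in>{?a..?b}. (phi l has_real_derivative f1 x) (at x within {?a..?b})"
      using c2 l unfolding C2_on_def by blast
    have nodes: "0 \<le> ?a" "?a < ?b" "?b \<le> Lx" using rep_nodes[OF rep l] by auto
    have "\<not> y islimpt E l" if y: "y \<in> {?a<..<?b}" for y
    proof
      assume lim: "y islimpt E l"
      have "(phi l has_real_derivative f1 y) (at y within {?a..?b})"
        using f1 y by auto
      moreover have "at y within {?a..?b} = at y" using y by (intro at_within_Icc_at) auto
      ultimately have dy: "(phi l has_real_derivative f1 y) (at y)" by simp
      have EE: "\<forall>z\<in>E l. phi l z = m" unfolding E_def by auto
      have py: "phi l y = m" and f0: "f1 y = 0" using limpt_level[OF dy lim EE] by auto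
      have geq: "g z = phi l z" if "z \<in> {?a<..<?b}" for z
        using rep l that unfolding piecewise_rep_def by auto
      have "(g has_real_derivative 0) (at y)"
        using has_field_derivative_transform_within_open[OF dy[unfolded f0], of "{?a<..<?b}" g] y geq
        by auto
      moreover have "y \<in> {0<..<Lx}" using y nodes by auto
      ultimately have "g y \<noteq> m" using flat by auto
      then show False using py geq[OF y] by simp
    qed
    then have "E l sparse_in {?a<..<?b}" by (subst sparse_in_open) auto
    then have "countable ({?a<..<?b} \<inter> E l)" by (intro sparse_imp_countable) auto
    moreover have "{?a<..<?b} \<inter> E l = E l" unfolding E_def by auto
    ultimately show ?thesis by simp
  qed
  have "countable (set xs \<union> (\<Union>l\<in>{..<length xs - 1}. E l))"
    using cE by (auto intro: countable_finite)
  then show ?thesis using sub countable_subset by blast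
qed

lemma in_some_region:
  assumes p: "p \<in> Omega H Lx" and off: "\<forall>k\<in>{1..I}. snd p \<noteq> g k (fst p)"
  shows "\<exists>k\<in>{1..I+1}. p \<in> region H Lx I g k"
proof -
  let ?x = "fst p" and ?y = "snd p"
  have py: "-H < ?y" "?y < H" using p unfolding Omega_def by (auto simp: mem_Times_iff)
  have i0: "iface H I g 0 ?x = -H" and iI: "iface H I g (Suc I) ?x = H" unfolding iface_def by auto
  have ex: "\<exists>k. k \<le> I + 1 \<and> ?y < iface H I g k ?x" using py iI by (intro exI[of _ "I+1"]) auto
  define k where "k = (LEAST k. k \<le> I + 1 \<and> ?y < iface H I g k ?x)"
  have k1: "k \<le> I + 1 \<and> ?y < iface H I g k ?x" unfolding k_def by (rule LeastI_ex[OF ex])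
  have k0: "k \<noteq> 0"
  proof
    assume "k = 0" then show False using k1 i0 py by simp
  qed
  have "k - 1 < k" using k0 by simp
  then have "\<not> (k - 1 \<le> I + 1 \<and> ?y < iface H I g (k - 1) ?x)"
    unfolding k_def by (rule not_less_Least)
  then have le: "iface H I g (k - 1) ?x \<le> ?y" using k1 by auto
  have ne: "iface H I g (k - 1) ?x \<noteq> ?y"
  proof (cases "k - 1 = 0")
    case True then show ?thesis using i0 py by simp
  next
    case False
    then have "k - 1 \<in> {1..I}" using k1 by auto
    moreover have "iface H I g (k - 1) ?x = g (k - 1) ?x" using False \<open>k - 1 \<in> {1..I}\<close>
      unfolding iface_def by auto
    ultimately show ?thesis using off by metis
  qed
  have "p \<in> region H Lx I g k" unfolding region_def using p le ne k1 by auto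
  then show ?thesis using k0 k1 by auto
qed

lemma region_vert:
  assumes a: "(x, y1) \<in> region H Lx I g k" and b: "(x, y2) \<in> region H Lx I g k"
  shows "{x} \<times> {min y1 y2..max y1 y2} \<subseteq> region H Lx I g k"
  using a b unfolding region_def Omega_def by (auto simp: mem_Times_iff min_def max_def split: if_splits)

lemma C11_bounds:
  assumes C: "C11_on U eps"
  obtains M where "M \<ge> 1" "\<forall>p\<in>U. cmod (eps p) \<le> M"
    "\<And>S p q. S \<subseteq> U \<Longrightarrow> convex S \<Longrightarrow> p \<in> S \<Longrightarrow> q \<in> S \<Longrightarrow> cmod (eps p - eps q) \<le> 2 * M * norm (p - q)"
proof -
  obtain d1 d2 M0 L where
    der: "\<forall>x\<in>U. (eps has_derivative (\<lambda>v. of_real (fst v) * d1 x + of_real (snd v) * d2 x)) (at x within U)"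
    and bd: "\<forall>x\<in>U. cmod (eps x) \<le> M0 \<and> cmod (d1 x) \<le> M0 \<and> cmod (d2 x) \<le> M0"
    using C unfolding C11_on_def by blast
  define M where "M = max 1 M0"
  have M1: "M \<ge> 1" unfolding M_def by simp
  have bM: "\<forall>x\<in>U. cmod (eps x) \<le> M \<and> cmod (d1 x) \<le> M \<and> cmod (d2 x) \<le> M"
    using bd unfolding M_def by force
  have lip: "cmod (eps p - eps q) \<le> 2 * M * norm (p - q)"
    if S: "S \<subseteq> U" "convex S" "p \<in> S" "q \<in> S" for S p q
  proof (rule differentiable_bound[OF S(2) _ _ S(3,4)])
    fix x assume x: "x \<in> S"
    show "(eps has_derivative (\<lambda>v. of_real (fst v) * d1 x + of_real (snd v) * d2 x)) (at x within S)"
      using der x S(1) by (meson has_derivative_subset subsetD)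
    show "onorm (\<lambda>v. of_real (fst v) * d1 x + of_real (snd v) * d2 x) \<le> 2 * M"
    proof (rule onorm_le)
      fix v :: "real \<times> real"
      have c1: "cmod (of_real (fst v) * d1 x + of_real (snd v) * d2 x)
          \<le> \<bar>fst v\<bar> * cmod (d1 x) + \<bar>snd v\<bar> * cmod (d2 x)"
        by (metis (no_types, lifting) norm_mult norm_of_real norm_triangle_ineq)
      have n1: "\<bar>fst v\<bar> \<le> norm v" using norm_fst_le[of "fst v" "snd v"] by simp
      have n2: "\<bar>snd v\<bar> \<le> norm v" using norm_snd_le[of "snd v" "fst v"] by simp
      have "\<bar>fst v\<bar> * cmod (d1 x) + \<bar>snd v\<bar> * cmod (d2 x) \<le> norm v * M + norm v * M"
        using bM x S(1) n1 n2
        by (intro add_mono mult_mono) (auto simp: real_norm_def[symmetric] simp del: real_norm_def)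
      with c1 show "cmod (of_real (fst v) * d1 x + of_real (snd v) * d2 x) \<le> 2 * M * norm v" by simp
    qed
  qed
  have "\<forall>p\<in>U. cmod (eps p) \<le> M" using bM by blast
  then show ?thesis using that[OF M1] lip by blast
qed

lemma null_vert:
  fixes A :: "real set"
  assumes "countable A"
  shows "(A \<times> (UNIV::real set)) \<in> null_sets (lborel :: (real \<times> real) measure)"
proof -
  have A: "A \<in> sets lborel" "emeasure lborel A = 0"
    using countable_imp_null_set_lborel[OF assms] by auto
  have "emeasure (lborel \<Otimes>\<^sub>M lborel) (A \<times> (UNIV::real set)) = emeasure lborel A * emeasure lborel (UNIV::real set)"
    using A by (intro lborel.emeasure_pair_measure_Times) auto
  also have "\<dots> = 0" using A by simp
  finally have "emeasure (lborel :: (real \<times> real) measure) (A \<times> UNIV) = 0" by (simp add: lborel_prod)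
  moreover have "A \<times> (UNIV::real set) \<in> sets (lborel \<Otimes>\<^sub>M lborel)"
    using A by (intro pair_measureI) auto
  then have "A \<times> (UNIV::real set) \<in> sets (lborel :: (real \<times> real) measure)"
    by (subst (asm) lborel_prod)
  ultimately show ?thesis by (intro null_setsI)
qed

lemma final_arith:
  fixes h q M c D :: real
  assumes h: "0 < h" "h \<le> 1" and q: "q \<ge> 1" and M: "M \<ge> 1" and c: "c \<ge> 0" and D: "D \<ge> 0"
  shows "((2*M) powr q * (c*h) + (2*M*h) powr q * D) powr (1/q) \<le> 2*M*(1+c+D) * h powr (1/q)"
proof -
  have hq: "h powr q \<le> h" using powr_mono'[of 1 q h] h q by simp
  have "(2*M*h) powr q = (2*M) powr q * h powr q" by (simp add: powr_mult)
  then have "(2*M) powr q * (c*h) + (2*M*h) powr q * D \<le> (2*M) powr q * (c*h) + (2*M) powr q * h * D"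
    using hq D by (simp add: mult_left_mono mult_right_mono)
  also have "\<dots> \<le> (2*M) powr q * h * (1+c+D)"
    using h c D by (simp add: algebra_simps)
  finally have le: "(2*M) powr q * (c*h) + (2*M*h) powr q * D \<le> (2*M) powr q * h * (1+c+D)" .
  have nn: "0 \<le> (2*M) powr q * (c*h) + (2*M*h) powr q * D" using c D h M by simp
  have "((2*M) powr q * (c*h) + (2*M*h) powr q * D) powr (1/q) \<le> ((2*M) powr q * h * (1+c+D)) powr (1/q)"
    using le nn q by (intro powr_mono2) auto
  also have "\<dots> = ((2*M) powr q) powr (1/q) * h powr (1/q) * (1+c+D) powr (1/q)"
    using h c D M by (simp add: powr_mult)
  also have "((2*M) powr q) powr (1/q) = 2*M" using q M by (simp add: powr_powr)
  also have "(1+c+D) powr (1/q) \<le> (1+c+D)"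
    using powr_mono[of "1/q" 1 "1+c+D"] q c D by simp
  then have "2*M * h powr (1/q) * (1+c+D) powr (1/q) \<le> 2*M * h powr (1/q) * (1+c+D)"
    using M h by (intro mult_left_mono) auto
  finally show ?thesis by (simp add: algebra_simps)
qed


definition tube :: "real \<Rightarrow> real \<Rightarrow> (real \<Rightarrow> real) \<Rightarrow> real \<Rightarrow> (real \<times> real) set" where
  "tube a b phi r = {p. fst p \<in> {a..b} \<and> \<bar>snd p - phi (fst p)\<bar> \<le> r}"

lemma tube:
  fixes phi :: "real \<Rightarrow> real"
  assumes c: "continuous_on {a..b} phi" and ab: "a \<le> b" and r: "r \<ge> 0"
  shows "tube a b phi r \<in> sets borel"
    "emeasure lborel (tube a b phi r) = ennreal (2*r*(b-a))"
proof -
  let ?T = "{p::real\<times>real. fst p \<in> {a..b} \<and> \<bar>snd p - phi (fst p)\<bar> \<le> r}"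
  have eq: "?T = ({a..b}\<times>UNIV) \<inter> (\<lambda>p. snd p - phi (fst p)) -` {-r..r}" by auto
  have "continuous_on ({a..b}\<times>UNIV) (\<lambda>p::real\<times>real. snd p - phi (fst p))"
    by (intro continuous_intros continuous_on_compose2[OF c]) auto
  then have "closed ?T" unfolding eq
    by (intro continuous_closed_preimage) (auto intro: closed_Times)
  then have T: "?T \<in> sets borel" by simp
  then show "tube a b phi r \<in> sets borel" unfolding tube_def .
  have "emeasure lborel ?T = emeasure (lborel \<Otimes>\<^sub>M lborel) ?T" by (simp add: lborel_prod)
  also have "\<dots> = (\<integral>\<^sup>+x. emeasure lborel (Pair x -` ?T) \<partial>lborel)"
    by (rule lborel.emeasure_pair_measure_alt) (unfold lborel_prod, use T in simp)
  also have "\<dots> = (\<integral>\<^sup>+x. ennreal (2*r) * indicator {a..b} x \<partial>lborel)"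
  proof (rule nn_integral_cong)
    fix x :: real
    have "Pair x -` ?T = (if x \<in> {a..b} then {phi x - r..phi x + r} else {})" by auto
    then show "emeasure lborel (Pair x -` ?T) = ennreal (2*r) * indicator {a..b} x"
      using r by (auto simp: indicator_def)
  qed
  also have "\<dots> = ennreal (2*r*(b-a))"
    using ab r by (simp add: nn_integral_cmult_indicator ennreal_mult)
  finally show "emeasure lborel (tube a b phi r) = ennreal (2*r*(b-a))" unfolding tube_def .
qed

theorem lemma6:
  fixes H Lx \<delta> CD :: real and I :: nat and g :: "nat \<Rightarrow> real \<Rightarrow> real"
    and eps :: "real \<times> real \<Rightarrow> complex"
  assumes "H > 0" and "Lx > 0" and "I \<ge> 1" and "\<delta> > 0" and "CD > 0"
    and "\<forall>k\<in>{1..I}. piecewise_lipschitz_iface Lx (g k)"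
    and "\<forall>k\<le>I. \<forall>x\<in>{0..Lx}. iface H I g k x + \<delta> \<le> iface H I g (Suc k) x"
    and "\<forall>k\<in>{1..I+1}. C11_on (region H Lx I g k) eps"
    and "\<forall>k\<in>{1..I}. piecewise_C2 Lx (g k)"
  shows "\<exists>C>0. \<exists>h0>0. \<forall>q::real. q \<ge> 1 \<longrightarrow>
           (\<forall>S hs. slicing H S hs \<and> mesh_ratio_ok CD S hs \<and> flat_points_on_lines Lx I g S hs
                  \<and> mesh S hs \<le> h0 \<longrightarrow>
              Lq_norm q (Omega H Lx) (\<lambda>x. eps x - eps_h eps S hs x)
                \<le> ennreal (C * mesh S hs powr (1 / q)))"
proof -
  note H = assms(1) and Lx = assms(2)
  have "\<forall>k\<in>{1..I}. \<exists>P. piecewise_rep Lx (g k) (fst P) (snd P) \<and>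
      (\<forall>l < length (fst P) - 1. C2_on {fst P!l..fst P!(l+1)} (snd P l))"
    using assms(9) unfolding piecewise_C2_def by auto
  then obtain P where P: "\<And>k. k \<in> {1..I} \<Longrightarrow> piecewise_rep Lx (g k) (fst (P k)) (snd (P k)) \<and>
      (\<forall>l < length (fst (P k)) - 1. C2_on {fst (P k)!l..fst (P k)!(l+1)} (snd (P k) l))"
    by metis
  define XS where "XS k = fst (P k)" for k
  define PHI where "PHI k = snd (P k)" for k
  have rep: "\<And>k. k \<in> {1..I} \<Longrightarrow> piecewise_rep Lx (g k) (XS k) (PHI k)"
    and c2: "\<And>k. k \<in> {1..I} \<Longrightarrow> \<forall>l < length (XS k) - 1. C2_on {XS k!l..XS k!(l+1)} (PHI k l)"
    using P unfolding XS_def PHI_def by auto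
  have cont: "continuous_on {XS k!l..XS k!(l+1)} (PHI k l)" if kl: "k \<in> {1..I}" "l < length (XS k) - 1" for k l
  proof -
    obtain f1 where "\<forall>x\<in>{XS k!l..XS k!(l+1)}. (PHI k l has_real_derivative f1 x) (at x within {XS k!l..XS k!(l+1)})"
      using c2[OF kl(1)] kl(2) unfolding C2_on_def by blast
    then show ?thesis by (intro DERIV_continuous_on) auto
  qed
  have nodes: "0 \<le> XS k!l" "XS k!l < XS k!(l+1)" "XS k!(l+1) \<le> Lx"
    if "k \<in> {1..I}" "l < length (XS k) - 1" for k l
    using rep_nodes[OF rep[OF that(1)] that(2)] by auto
  have "\<forall>k\<in>{1..I+1}. \<exists>M. M \<ge> 1 \<and> (\<forall>p\<in>region H Lx I g k. cmod (eps p) \<le> M) \<and>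
     (\<forall>S p q. S \<subseteq> region H Lx I g k \<longrightarrow> convex S \<longrightarrow> p \<in> S \<longrightarrow> q \<in> S \<longrightarrow>
        cmod (eps p - eps q) \<le> 2 * M * norm (p - q))"
  proof
    fix k assume "k \<in> {1..I+1}"
    then obtain M where "M \<ge> 1" "\<forall>p\<in>region H Lx I g k. cmod (eps p) \<le> M"
      "\<And>S p q. S \<subseteq> region H Lx I g k \<Longrightarrow> convex S \<Longrightarrow> p \<in> S \<Longrightarrow> q \<in> S \<Longrightarrow>
         cmod (eps p - eps q) \<le> 2 * M * norm (p - q)"
      using C11_bounds assms(8) by metis
    then show "\<exists>M. M \<ge> 1 \<and> (\<forall>p\<in>region H Lx I g k. cmod (eps p) \<le> M) \<and>
     (\<forall>S p q. S \<subseteq> region H Lx I g k \<longrightarrow> convex S \<longrightarrow> p \<in> S \<longrightarrow> q \<in> S \<longrightarrow>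
        cmod (eps p - eps q) \<le> 2 * M * norm (p - q))" by blast
  qed
  then obtain MM where MM: "\<And>k. k \<in> {1..I+1} \<Longrightarrow> MM k \<ge> 1 \<and> (\<forall>p\<in>region H Lx I g k. cmod (eps p) \<le> MM k) \<and>
     (\<forall>S p q. S \<subseteq> region H Lx I g k \<longrightarrow> convex S \<longrightarrow> p \<in> S \<longrightarrow> q \<in> S \<longrightarrow>
        cmod (eps p - eps q) \<le> 2 * MM k * norm (p - q))"
    by metis
  define M where "M = (\<Sum>k\<in>{1..I+1}. MM k)"
  have MMM: "MM k \<le> M" if "k \<in> {1..I+1}" for k
    unfolding M_def using that MM by (intro member_le_sum) (auto intro: order_trans[OF zero_le_one])
  have M1: "M \<ge> 1" using MMM[of 1] MM[of 1] by force
  define nK where "nK = (\<Sum>k\<in>{1..I}. length (XS k))"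
  define c where "c = 2 * Lx * real nK"
  define D where "D = 2 * H * Lx"
  have c0: "c \<ge> 0" unfolding c_def using Lx by simp
  have D0: "D \<ge> 0" unfolding D_def using H Lx by simp
  define C where "C = 2 * M * (1 + c + D)"
  have C0: "C > 0" unfolding C_def using M1 c0 D0 by simp
  define Idx where "Idx = (SIGMA k:{1..I}. {..<length (XS k) - 1})"
  have fIdx: "finite Idx" unfolding Idx_def by auto
  have cIdx: "real (card Idx) \<le> real nK"
  proof -
    have "card Idx = (\<Sum>k\<in>{1..I}. card {..<length (XS k) - 1})"
      unfolding Idx_def by (rule card_SigmaI) auto
    also have "\<dots> \<le> nK" unfolding nK_def by (intro sum_mono) auto
    finally show ?thesis by simp
  qed
  have tube_sets: "tube (XS k!l) (XS k!(l+1)) (PHI k l) r \<in> sets borel"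
    and tube_meas: "emeasure lborel (tube (XS k!l) (XS k!(l+1)) (PHI k l) r) \<le> ennreal (2*r*Lx)"
    if "(k, l) \<in> Idx" "r \<ge> 0" for k l r
  proof -
    have kl: "k \<in> {1..I}" "l < length (XS k) - 1" using that unfolding Idx_def by auto
    show "tube (XS k!l) (XS k!(l+1)) (PHI k l) r \<in> sets borel"
      using tube(1)[OF cont[OF kl] _ that(2)] nodes[OF kl] by auto
    have "emeasure lborel (tube (XS k!l) (XS k!(l+1)) (PHI k l) r) = ennreal (2*r*(XS k!(l+1) - XS k!l))"
      using tube(2)[OF cont[OF kl] _ that(2)] nodes[OF kl] by auto
    also have "\<dots> \<le> ennreal (2*r*Lx)"
      using nodes[OF kl] that(2) by (intro ennreal_leI mult_left_mono) auto
    finally show "emeasure lborel (tube (XS k!l) (XS k!(l+1)) (PHI k l) r) \<le> ennreal (2*r*Lx)" .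
  qed
  define TU where "TU r = (\<Union>(k,l)\<in>Idx. tube (XS k!l) (XS k!(l+1)) (PHI k l) r)" for r
  have TU_sets: "TU r \<in> sets borel" if "r \<ge> 0" for r
    unfolding TU_def using tube_sets[OF _ that] fIdx by auto
  have TU_meas: "emeasure lborel (TU r) \<le> ennreal (c * r)" if r: "r \<ge> 0" for r
  proof -
    have "emeasure lborel (TU r) \<le> (\<Sum>i\<in>Idx. emeasure lborel (case i of (k,l) \<Rightarrow> tube (XS k!l) (XS k!(l+1)) (PHI k l) r))"
      unfolding TU_def using fIdx tube_sets[OF _ r] by (intro emeasure_subadditive_finite) auto
    also have "\<dots> \<le> (\<Sum>i\<in>Idx. ennreal (2*r*Lx))"
      using tube_meas[OF _ r] by (intro sum_mono) auto
    also have "\<dots> = ennreal (real (card Idx) * (2*r*Lx))" using r Lx by (simp add: ennreal_of_nat_eq_real_of_nat ennreal_mult)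
    also have "\<dots> \<le> ennreal (c * r)"
    proof (rule ennreal_leI)
      have "real (card Idx) * (2*r*Lx) \<le> real nK * (2*r*Lx)" using cIdx r Lx by (intro mult_right_mono) auto
      then show "real (card Idx) * (2*r*Lx) \<le> c * r" unfolding c_def by (simp add: algebra_simps)
    qed
    finally show ?thesis .
  qed
  have in_TU: "p \<in> TU r" if kp: "k \<in> {1..I}" "fst p \<in> {0..Lx}" "\<bar>snd p - g k (fst p)\<bar> \<le> r" for k p r
  proof -
    obtain l where l: "l < length (XS k) - 1" "XS k!l \<le> fst p" "fst p \<le> XS k!(l+1)" "g k (fst p) = PHI k l (fst p)"
      using rep_cover[OF rep[OF kp(1)]] kp(2) by auto
    have "(k, l) \<in> Idx" unfolding Idx_def using kp(1) l(1) by auto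
    moreover have "p \<in> tube (XS k!l) (XS k!(l+1)) (PHI k l) r" unfolding tube_def using l kp(3) by auto
    ultimately show ?thesis unfolding TU_def by auto
  qed
  have Om_sets: "Omega H Lx \<in> sets borel" unfolding Omega_def by (intro borel_open open_Times) auto
  have Om_meas: "emeasure lborel (Omega H Lx) \<le> ennreal D"
  proof -
    have "Omega H Lx \<subseteq> tube 0 Lx (\<lambda>_. 0) H" unfolding Omega_def tube_def by auto
    then have "emeasure lborel (Omega H Lx) \<le> emeasure lborel (tube 0 Lx (\<lambda>_. 0) H)"
      using tube(1)[of 0 Lx "\<lambda>_. 0" H] H Lx by (intro emeasure_mono) auto
    also have "\<dots> = ennreal D" using tube(2)[of 0 Lx "\<lambda>_. 0" H] H Lx unfolding D_def by (simp add: algebra_simps)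
    finally show ?thesis .
  qed
  show ?thesis
  proof (rule exI[of _ C], rule conjI[OF C0], rule exI[of _ 1], rule conjI[OF zero_less_one], intro allI impI)
    fix q :: real and S hs
    assume q: "q \<ge> 1"
    assume asm: "slicing H S hs \<and> mesh_ratio_ok CD S hs \<and> flat_points_on_lines Lx I g S hs \<and> mesh S hs \<le> 1"
    then have sl: "slicing H S hs" and flat: "flat_points_on_lines Lx I g S hs" and h1: "mesh S hs \<le> 1" by auto
    define h where "h = mesh S hs"
    have h0: "h > 0" unfolding h_def using mesh_pos[OF sl] .
    have h1': "h \<le> 1" unfolding h_def using h1 .
    define mid where "mid j = (hs (j - 1) + hs j) / 2" for j
    define A where "A = (\<Union>k\<in>{1..I}. \<Union>j\<in>{1..S}. {x\<in>{0..Lx}. g k x = mid j})"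
    have cA: "countable A"
    proof -
      have "countable {x\<in>{0..Lx}. g k x = mid j}" if k: "k \<in> {1..I}" and j: "j \<in> {1..S}" for k j
      proof (rule level_countable[OF rep[OF k] c2[OF k]], intro ballI impI)
        fix x assume x: "x \<in> {0<..<Lx}" and d: "(g k has_real_derivative 0) (at x)"
        then obtain i where "i \<in> {0..S}" "g k x = hs i" using flat k unfolding flat_points_on_lines_def by blast
        then show "g k x \<noteq> mid j" using mid_not_hs[OF sl j, of i] unfolding mid_def by auto
      qed
      then show ?thesis unfolding A_def by (intro countable_UN[OF countableI_type] countable_UN) auto
    qed
    define N where "N = TU 0 \<union> A \<times> UNIV"
    have N: "N \<in> null_sets lborel"
    proof -
      have "TU 0 \<in> null_sets lborel"
        using TU_sets[of 0] TU_meas[of 0] by (intro null_setsI) auto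
      then show ?thesis unfolding N_def using null_vert[OF cA] by auto
    qed
    define B where "B = TU h"
    define F where "F p = ennreal (cmod (eps p - eps_h eps S hs p) powr q) * indicator (Omega H Lx) p" for p
    define G where "G p = ennreal ((2*M) powr q) * indicator B p + ennreal ((2*M*h) powr q) * indicator (Omega H Lx) p" for p
    have pt: "F p \<le> G p" if pN: "p \<notin> N" for p
    proof (cases "p \<in> Omega H Lx")
      case False then show ?thesis unfolding F_def by simp
    next
      case pO: True
      define x where "x = fst p"
      define y where "y = snd p"
      have pxy: "p = (x, y)" unfolding x_def y_def by simp
      have xr: "0 < x" "x < Lx" and yr: "-H < y" "y < H"
        using pO unfolding Omega_def x_def y_def by (auto simp: mem_Times_iff)
      obtain j where j: "j \<in> {1..S}" "hs (j - 1) \<le> y" "y < hs j"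
        using slice_exists[OF sl, of y] yr by auto
      have sb: "-H \<le> hs (j - 1)" "hs j \<le> H" "hs (j - 1) < hs j" "hs j - hs (j - 1) \<le> h"
        using slice_bounds[OF sl j(1)] unfolding h_def by auto
      have eh: "eps_h eps S hs p = eps (x, mid j)"
        using eps_h_eq[OF sl j(1), of p eps] j unfolding mid_def x_def y_def by auto
      have ymid: "\<bar>y - mid j\<bar> \<le> h" using j(2,3) sb(4) unfolding mid_def abs_le_iff by (auto simp: field_simps)
      have qO: "(x, mid j) \<in> Omega H Lx" using xr sb unfolding Omega_def mid_def by auto
      have offp: "\<forall>k\<in>{1..I}. snd p \<noteq> g k (fst p)"
      proof (intro ballI notI)
        fix k assume k: "k \<in> {1..I}" and e: "snd p = g k (fst p)"
        have "p \<in> TU 0" using in_TU[OF k, of p 0] e xr unfolding x_def by auto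
        then show False using pN unfolding N_def by auto
      qed
      have offq: "\<forall>k\<in>{1..I}. snd (x, mid j) \<noteq> g k (fst (x, mid j))"
      proof (intro ballI notI)
        fix k assume k: "k \<in> {1..I}" and e: "snd (x, mid j) = g k (fst (x, mid j))"
        have "x \<in> {x\<in>{0..Lx}. g k x = mid j}" using e xr by auto
        then have "x \<in> A" unfolding A_def using k j(1) by blast
        then have "p \<in> N" unfolding N_def using pxy by auto
        then show False using pN by simp
      qed
      obtain k0 where k0: "k0 \<in> {1..I+1}" "p \<in> region H Lx I g k0" using in_some_region[where g=g and I=I, OF pO offp] by blast
      obtain k1 where k1: "k1 \<in> {1..I+1}" "(x, mid j) \<in> region H Lx I g k1" using in_some_region[where g=g and I=I, OF qO offq] by blast
      have b0: "cmod (eps p) \<le> M" using MM[OF k0(1)] k0(2) MMM[OF k0(1)] by force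
      have b1: "cmod (eps (x, mid j)) \<le> M" using MM[OF k1(1)] k1(2) MMM[OF k1(1)] by force
      have diff: "cmod (eps p - eps_h eps S hs p) \<le> 2 * M"
        using norm_triangle_ineq4[of "eps p" "eps (x, mid j)"] b0 b1 eh by simp
      show ?thesis
      proof (cases "p \<in> B")
        case True
        have "cmod (eps p - eps_h eps S hs p) powr q \<le> (2*M) powr q"
          using diff q by (intro powr_mono2) auto
        then have "F p \<le> ennreal ((2*M) powr q)" unfolding F_def using pO by (simp add: ennreal_leI)
        also have "\<dots> \<le> G p" unfolding G_def using True by simp
        finally show ?thesis .
      next
        case False
        have far: "\<bar>y - g k x\<bar> > h" if k: "k \<in> {1..I}" for k
        proof (rule ccontr)
          assume "\<not> \<bar>y - g k x\<bar> > h"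
          then have "p \<in> TU h" using in_TU[OF k, of p h] xr unfolding x_def y_def by auto
          then show False using False unfolding B_def by simp
        qed
        have lo: "iface H I g (k0 - 1) x < mid j"
        proof (cases "k0 - 1 = 0")
          case True then show ?thesis using sb unfolding iface_def mid_def by auto
        next
          case False
          then have kk: "k0 - 1 \<in> {1..I}" using k0(1) by auto
          have "iface H I g (k0 - 1) x = g (k0 - 1) x" using False kk unfolding iface_def by auto
          moreover have "iface H I g (k0 - 1) x < y" using k0(2) unfolding region_def x_def y_def by auto
          ultimately show ?thesis using far[OF kk] ymid by auto
        qed
        have hi: "mid j < iface H I g k0 x"
        proof (cases "k0 = I + 1")
          case True then show ?thesis using sb unfolding iface_def mid_def by auto
        next
          case False
          then have kk: "k0 \<in> {1..I}" using k0(1) by auto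
          have "iface H I g k0 x = g k0 x" using False kk unfolding iface_def by auto
          moreover have "y < iface H I g k0 x" using k0(2) unfolding region_def x_def y_def by auto
          ultimately show ?thesis using far[OF kk] ymid by auto
        qed
        have q0: "(x, mid j) \<in> region H Lx I g k0" unfolding region_def using qO lo hi by auto
        have p0: "(x, y) \<in> region H Lx I g k0" using k0(2) pxy by simp
        let ?Sg = "{x} \<times> {min y (mid j)..max y (mid j)}"
        have "cmod (eps (x, y) - eps (x, mid j)) \<le> 2 * MM k0 * norm ((x, y) - (x, mid j))"
          using MM[OF k0(1)] region_vert[OF p0 q0] by (auto intro!: convex_Times simp: mem_Times_iff)
        also have "norm ((x, y) - (x, mid j)) = \<bar>y - mid j\<bar>" by (simp add: norm_Pair)
        also have "2 * MM k0 * \<bar>y - mid j\<bar> \<le> 2 * M * h"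
          using MMM[OF k0(1)] MM[OF k0(1)] ymid by (intro mult_mono) auto
        finally have "cmod (eps p - eps_h eps S hs p) \<le> 2 * M * h" using eh pxy by simp
        then have "cmod (eps p - eps_h eps S hs p) powr q \<le> (2*M*h) powr q"
          using q by (intro powr_mono2) auto
        then have "F p \<le> ennreal ((2*M*h) powr q)" unfolding F_def using pO by (simp add: ennreal_leI)
        also have "\<dots> \<le> G p" unfolding G_def using pO by simp
        finally show ?thesis .
      qed
    qed
    have AE: "AE p in lborel. F p \<le> G p"
      by (rule AE_I'[OF N]) (use pt in auto)
    have Bs: "B \<in> sets borel" unfolding B_def using TU_sets h0 by simp
    define X where "X = (2*M) powr q * (c*h) + (2*M*h) powr q * D"
    have "(\<integral>\<^sup>+p. F p \<partial>lebesgue) = (\<integral>\<^sup>+p. F p \<partial>lborel)" by (rule nn_integral_completion)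
    also have "\<dots> \<le> (\<integral>\<^sup>+p. G p \<partial>lborel)" by (rule nn_integral_mono_AE[OF AE])
    also have "\<dots> = ennreal ((2*M) powr q) * emeasure lborel B + ennreal ((2*M*h) powr q) * emeasure lborel (Omega H Lx)"
      unfolding G_def using Bs Om_sets by (simp add: nn_integral_add nn_integral_cmult_indicator)
    also have "\<dots> \<le> ennreal ((2*M) powr q) * ennreal (c*h) + ennreal ((2*M*h) powr q) * ennreal D"
    proof -
      have m1: "emeasure lborel B \<le> ennreal (c*h)" using TU_meas[of h] h0 unfolding B_def by simp
      show ?thesis by (intro add_mono mult_left_mono m1 Om_meas zero_le)
    qed
    also have "\<dots> = ennreal X"
    proof -
      have a1: "0 \<le> (2*M) powr q" "0 \<le> c*h" "0 \<le> (2*M*h) powr q" "0 \<le> D"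
        using c0 h0 D0 by auto
      have "ennreal ((2*M) powr q) * ennreal (c*h) = ennreal ((2*M) powr q * (c*h))"
        using a1 by (simp only: ennreal_mult)
      moreover have "ennreal ((2*M*h) powr q) * ennreal D = ennreal ((2*M*h) powr q * D)"
        using a1 by (simp only: ennreal_mult)
      moreover have "ennreal ((2*M) powr q * (c*h)) + ennreal ((2*M*h) powr q * D) = ennreal X"
        unfolding X_def using a1 by (simp only: ennreal_plus mult_nonneg_nonneg)
      ultimately show ?thesis by simp
    qed
    finally have Ile: "(\<integral>\<^sup>+p. F p \<partial>lebesgue) \<le> ennreal X" .
    have X0: "X \<ge> 0" unfolding X_def using c0 h0 D0 by simp
    have Xle: "X powr (1/q) \<le> C * h powr (1/q)"
      unfolding X_def C_def using final_arith[OF h0 h1' q M1 c0 D0] .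
    let ?I = "\<integral>\<^sup>+ x. ennreal (cmod (eps x - eps_h eps S hs x) powr q) * indicator (Omega H Lx) x \<partial>lebesgue"
    have II: "?I = (\<integral>\<^sup>+p. F p \<partial>lebesgue)" unfolding F_def by simp
    have fin: "?I \<noteq> \<infinity>" using Ile II by (auto simp: top_unique)
    have e2: "enn2real ?I \<le> X" using Ile II X0 by (intro enn2real_leI) auto
    have "enn2real ?I powr (1/q) \<le> X powr (1/q)"
      using e2 q by (intro powr_mono2) auto
    then have "enn2real ?I powr (1/q) \<le> C * h powr (1/q)" using Xle by linarith
    then have fin2: "Lq_norm q (Omega H Lx) (\<lambda>x. eps x - eps_h eps S hs x) \<le> ennreal (C * h powr (1 / q))"
      unfolding Lq_norm_def Let_def using fin by (simp add: ennreal_leI)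
    show "Lq_norm q (Omega H Lx) (\<lambda>x. eps x - eps_h eps S hs x) \<le> ennreal (C * mesh S hs powr (1 / q))"
      using fin2 unfolding h_def .
  qed
qed

end
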